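(* Let $G$ be a graph with $|V(G)|=2^k$, $\mathrm{enc}:V(G)\to\{0,1\}^k$ a bijection, and $R[G]=(P,N)$ with $P=\{\mathrm{enc}(u)1\mathrm{enc}(u)^R:u\in V(G)\}$, $N=\{\mathrm{enc}(u)1\mathrm{enc}(v)^R:uv\in E(G)\}$. Then every NFA consistent with $(P,N)$ has at least $\chi(G)$ states. Consequently $\mathrm{opt}_{DFA}(R[G])\ge\mathrm{opt}_{NFA}(R[G])\ge\chi(G)$.
   Context: $\chi(G)$ is the chromatic number. $\mathrm{opt}_{DFA}$ and $\mathrm{opt}_{NFA}$ denote the minimum number of states of a DFA (possibly with partial transition function), resp. NFA, over $\{0,1\}$ that accepts all of $P$ and rejects all of $N$. $x^R$ is string reversal. *)

theory Defs
  imports Main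
begin

definition simple_graph :: "'a set \<Rightarrow> ('a \<Rightarrow> 'a \<Rightarrow> bool) \<Rightarrow> bool" where
  "simple_graph V E \<longleftrightarrow> finite V \<and> (\<forall>u v. E u v \<longrightarrow> u \<in> V \<and> v \<in> V)
     \<and> (\<forall>u v. E u v \<longrightarrow> E v u) \<and> (\<forall>u. \<not> E u u)"

definition proper_colouring :: "'a set \<Rightarrow> ('a \<Rightarrow> 'a \<Rightarrow> bool) \<Rightarrow> nat \<Rightarrow> ('a \<Rightarrow> nat) \<Rightarrow> bool" where
  "proper_colouring V E c f \<longleftrightarrow> (\<forall>v\<in>V. f v < c) \<and>
     (\<forall>u\<in>V. \<forall>v\<in>V. E u v \<longrightarrow> f u \<noteq> f v)"

definition chromatic_number :: "'a set \<Rightarrow> ('a \<Rightarrow> 'a \<Rightarrow> bool) \<Rightarrow> nat" where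
  "chromatic_number V E = (LEAST c. \<exists>f. proper_colouring V E c f)"

text \<open>Words over {0,1} are bool lists (False = 0, True = 1).\<close>

definition nfa_wf :: "'s set \<Rightarrow> 's set \<Rightarrow> ('s \<Rightarrow> bool \<Rightarrow> 's set) \<Rightarrow> 's set \<Rightarrow> bool" where
  "nfa_wf Q I \<delta> F \<longleftrightarrow> finite Q \<and> I \<subseteq> Q \<and> F \<subseteq> Q \<and> (\<forall>q\<in>Q. \<forall>a. \<delta> q a \<subseteq> Q)"

fun nfa_steps :: "('s \<Rightarrow> bool \<Rightarrow> 's set) \<Rightarrow> 's set \<Rightarrow> bool list \<Rightarrow> 's set" where
  "nfa_steps \<delta> S [] = S"
| "nfa_steps \<delta> S (a # w) = nfa_steps \<delta> (\<Union>q\<in>S. \<delta> q a) w"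

definition nfa_accepts :: "'s set \<Rightarrow> ('s \<Rightarrow> bool \<Rightarrow> 's set) \<Rightarrow> 's set \<Rightarrow> bool list \<Rightarrow> bool" where
  "nfa_accepts I \<delta> F w \<longleftrightarrow> nfa_steps \<delta> I w \<inter> F \<noteq> {}"

definition nfa_consistent :: "'s set \<Rightarrow> 's set \<Rightarrow> ('s \<Rightarrow> bool \<Rightarrow> 's set) \<Rightarrow> 's set
     \<Rightarrow> bool list set \<Rightarrow> bool list set \<Rightarrow> bool" where
  "nfa_consistent Q I \<delta> F P N \<longleftrightarrow> nfa_wf Q I \<delta> F \<and>
     (\<forall>w\<in>P. nfa_accepts I \<delta> F w) \<and> (\<forall>w\<in>N. \<not> nfa_accepts I \<delta> F w)"

definition dfa_wf :: "'s set \<Rightarrow> 's \<Rightarrow> ('s \<Rightarrow> bool \<Rightarrow> 's option) \<Rightarrow> 's set \<Rightarrow> bool" where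
  "dfa_wf Q q0 \<delta> F \<longleftrightarrow> finite Q \<and> q0 \<in> Q \<and> F \<subseteq> Q \<and>
     (\<forall>q\<in>Q. \<forall>a q'. \<delta> q a = Some q' \<longrightarrow> q' \<in> Q)"

fun dfa_run :: "('s \<Rightarrow> bool \<Rightarrow> 's option) \<Rightarrow> 's \<Rightarrow> bool list \<Rightarrow> 's option" where
  "dfa_run \<delta> q [] = Some q"
| "dfa_run \<delta> q (a # w) = (case \<delta> q a of None \<Rightarrow> None | Some q' \<Rightarrow> dfa_run \<delta> q' w)"

definition dfa_accepts :: "'s \<Rightarrow> ('s \<Rightarrow> bool \<Rightarrow> 's option) \<Rightarrow> 's set \<Rightarrow> bool list \<Rightarrow> bool" where
  "dfa_accepts q0 \<delta> F w \<longleftrightarrow> (\<exists>q. dfa_run \<delta> q0 w = Some q \<and> q \<in> F)"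

definition dfa_consistent :: "'s set \<Rightarrow> 's \<Rightarrow> ('s \<Rightarrow> bool \<Rightarrow> 's option) \<Rightarrow> 's set
     \<Rightarrow> bool list set \<Rightarrow> bool list set \<Rightarrow> bool" where
  "dfa_consistent Q q0 \<delta> F P N \<longleftrightarrow> dfa_wf Q q0 \<delta> F \<and>
     (\<forall>w\<in>P. dfa_accepts q0 \<delta> F w) \<and> (\<forall>w\<in>N. \<not> dfa_accepts q0 \<delta> F w)"

text \<open>Minimum number of states (state type nat is w.l.o.g. for finite automata).\<close>
definition opt_NFA :: "bool list set \<Rightarrow> bool list set \<Rightarrow> nat" where
  "opt_NFA P N = (LEAST n. \<exists>(Q::nat set) I \<delta> F. nfa_consistent Q I \<delta> F P N \<and> card Q = n)"

definition opt_DFA :: "bool list set \<Rightarrow> bool list set \<Rightarrow> nat" where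
  "opt_DFA P N = (LEAST n. \<exists>(Q::nat set) q0 \<delta> F. dfa_consistent Q q0 \<delta> F P N \<and> card Q = n)"

definition red_P :: "'a set \<Rightarrow> ('a \<Rightarrow> bool list) \<Rightarrow> bool list set" where
  "red_P V enc = {enc u @ [True] @ rev (enc u) | u. u \<in> V}"

definition red_N :: "'a set \<Rightarrow> ('a \<Rightarrow> 'a \<Rightarrow> bool) \<Rightarrow> ('a \<Rightarrow> bool list) \<Rightarrow> bool list set" where
  "red_N V E enc = {enc u @ [True] @ rev (enc v) | u v. u \<in> V \<and> v \<in> V \<and> E u v}"

end

theory Submission
  imports Defs "HOL-Library.Countable"
begin

lemma steps_union: "nfa_steps \<delta> S w = (\<Union>q\<in>S. nfa_steps \<delta> {q} w)"
proof (induction w arbitrary: S)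
  case Nil then show ?case by simp
next
  case (Cons a w)
  have "nfa_steps \<delta> S (a # w) = (\<Union>p\<in>(\<Union>q\<in>S. \<delta> q a). nfa_steps \<delta> {p} w)"
    by (simp only: nfa_steps.simps Cons.IH[of "\<Union>q\<in>S. \<delta> q a"])
  also have "\<dots> = (\<Union>q\<in>S. \<Union>p\<in>\<delta> q a. nfa_steps \<delta> {p} w)" by blast
  also have "\<dots> = (\<Union>q\<in>S. nfa_steps \<delta> {q} (a # w))"
  proof -
    have "nfa_steps \<delta> {q} (a # w) = (\<Union>p\<in>\<delta> q a. nfa_steps \<delta> {p} w)" for q
      using Cons.IH[of "\<delta> q a"] by (simp del: UN_simps)
    then show ?thesis by simp
  qed
  finally show ?case .
qed

lemma steps_append: "nfa_steps \<delta> S (x @ y) = nfa_steps \<delta> (nfa_steps \<delta> S x) y"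
  by (induction x arbitrary: S) auto

lemma steps_in_Q: "nfa_wf Q I \<delta> F \<Longrightarrow> S \<subseteq> Q \<Longrightarrow> nfa_steps \<delta> S w \<subseteq> Q"
proof (induction w arbitrary: S)
  case Nil then show ?case by simp
next
  case (Cons a w)
  have "(\<Union>q\<in>S. \<delta> q a) \<subseteq> Q" using Cons.prems unfolding nfa_wf_def by blast
  then show ?case using Cons by simp
qed

lemma part1:
  fixes Q :: "'s set"
  assumes cons: "nfa_consistent Q I \<delta> F (red_P V enc) (red_N V E enc)"
  shows "chromatic_number V E \<le> card Q"
proof -
  have wf: "nfa_wf Q I \<delta> F" using cons unfolding nfa_consistent_def by simp
  have fin: "finite Q" using wf unfolding nfa_wf_def by simp
  define rest where "rest u = [True] @ rev (enc u)" for u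
  have ex: "\<exists>q. q \<in> nfa_steps \<delta> I (enc u) \<and> nfa_steps \<delta> {q} (rest u) \<inter> F \<noteq> {}"
    if "u \<in> V" for u
  proof -
    have "enc u @ rest u \<in> red_P V enc" using that unfolding red_P_def rest_def by auto
    then have "nfa_steps \<delta> I (enc u @ rest u) \<inter> F \<noteq> {}"
      using cons unfolding nfa_consistent_def nfa_accepts_def by blast
    then show ?thesis
      unfolding steps_append by (subst (asm) steps_union) blast
  qed
  define qq where "qq u = (SOME q. q \<in> nfa_steps \<delta> I (enc u) \<and> nfa_steps \<delta> {q} (rest u) \<inter> F \<noteq> {})" for u
  have qq: "qq u \<in> nfa_steps \<delta> I (enc u) \<and> nfa_steps \<delta> {qq u} (rest u) \<inter> F \<noteq> {}"
    if "u \<in> V" for u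
    unfolding qq_def using someI_ex[OF ex[OF that]] .
  have IQ: "I \<subseteq> Q" using wf unfolding nfa_wf_def by simp
  have qqQ: "qq u \<in> Q" if "u \<in> V" for u
    using qq[OF that] steps_in_Q[OF wf IQ] by blast
  obtain h where h: "bij_betw h {0..<card Q} Q" using ex_bij_betw_nat_finite[OF fin] by blast
  define g where "g = inv_into {0..<card Q} h"
  have gb: "bij_betw g Q {0..<card Q}" unfolding g_def using h by (rule bij_betw_inv_into)
  define f where "f u = g (qq u)" for u
  have "proper_colouring V E (card Q) f"
    unfolding proper_colouring_def
  proof (intro conjI ballI impI)
    fix v assume "v \<in> V"
    then have "g (qq v) \<in> {0..<card Q}" using bij_betwE[OF gb] qqQ by blast
    then show "f v < card Q" unfolding f_def by simp
  next
    fix u v assume uv: "u \<in> V" "v \<in> V" "E u v"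
    show "f u \<noteq> f v"
    proof
      assume "f u = f v"
      then have "g (qq u) = g (qq v)" unfolding f_def .
      then have eq: "qq u = qq v"
        using inj_onD[OF bij_betw_imp_inj_on[OF gb] _ qqQ[OF uv(1)] qqQ[OF uv(2)]] by blast
      have "enc u @ rest v \<in> red_N V E enc" using uv unfolding red_N_def rest_def by auto
      then have na: "nfa_steps \<delta> I (enc u @ rest v) \<inter> F = {}"
        using cons unfolding nfa_consistent_def nfa_accepts_def by blast
      have "nfa_steps \<delta> {qq v} (rest v) \<subseteq> nfa_steps \<delta> I (enc u @ rest v)"
      proof -
        have "nfa_steps \<delta> (nfa_steps \<delta> I (enc u)) (rest v)
           = (\<Union>q\<in>nfa_steps \<delta> I (enc u). nfa_steps \<delta> {q} (rest v))" by (rule steps_union)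
        moreover have "qq v \<in> nfa_steps \<delta> I (enc u)" using qq[OF uv(1)] eq by simp
        ultimately show ?thesis unfolding steps_append by blast
      qed
      then show False using na qq[OF uv(2)] by blast
    qed
  qed
  then show ?thesis unfolding chromatic_number_def by (intro Least_le) blast
qed

definition tdelta :: "nat \<Rightarrow> nat \<Rightarrow> bool \<Rightarrow> nat option" where
  "tdelta L q a = (if length (from_nat q :: bool list) < L then Some (to_nat (from_nat q @ [a] :: bool list)) else None)"

lemma trun: "length (u @ w) \<le> L \<Longrightarrow> dfa_run (tdelta L) (to_nat (u::bool list)) w = Some (to_nat (u @ w))"
proof (induction w arbitrary: u)
  case Nil then show ?case by simp
next
  case (Cons a w)
  have "tdelta L (to_nat u) a = Some (to_nat (u @ [a]))"
    using Cons.prems unfolding tdelta_def by simp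
  then show ?case using Cons.IH[of "u @ [a]"] Cons.prems by simp
qed

lemma dfa_exists:
  assumes "P \<inter> N = {}" "\<forall>w\<in>P \<union> N. length w \<le> L"
  shows "\<exists>(Q::nat set) q0 \<delta> F. dfa_consistent Q q0 \<delta> F P N"
proof -
  define Q where "Q = to_nat ` {w :: bool list. length w \<le> L}"
  have fin: "finite {w :: bool list. length w \<le> L}"
    using finite_lists_length_le[of "UNIV :: bool set" L] by simp
  have wf: "dfa_wf Q (to_nat ([]::bool list)) (tdelta L) (to_nat ` P)"
    unfolding dfa_wf_def Q_def using fin assms(2)
    by (auto simp: tdelta_def split: if_splits)
  have acc: "dfa_accepts (to_nat ([]::bool list)) (tdelta L) (to_nat ` P) w \<longleftrightarrow> w \<in> P"
    if "length w \<le> L" for w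
    using trun[of "[]" w L] that unfolding dfa_accepts_def
    by (auto dest: injD[OF inj_to_nat])
  show ?thesis using wf acc assms unfolding dfa_consistent_def by blast
qed

lemma dfa_to_nfa:
  assumes "dfa_consistent Q q0 \<delta> F P N"
  shows "nfa_consistent Q {q0} (\<lambda>q a. set_option (\<delta> q a)) F P N"
proof -
  have st: "nfa_steps (\<lambda>q a. set_option (\<delta> q a)) {q} w = set_option (dfa_run \<delta> q w)" for q w
  proof (induction w arbitrary: q)
    case Nil then show ?case by simp
  next
    case (Cons a w)
    have e: "nfa_steps \<delta>' {} w = {}" for \<delta>' :: "'a \<Rightarrow> bool \<Rightarrow> 'a set" and w
      by (induction w) auto
    show ?case using Cons e by (cases "\<delta> q a") auto
  qed
  have acc: "nfa_accepts {q0} (\<lambda>q a. set_option (\<delta> q a)) F w = dfa_accepts q0 \<delta> F w" for w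
    unfolding nfa_accepts_def dfa_accepts_def st by (cases "dfa_run \<delta> q0 w") auto
  show ?thesis using assms unfolding nfa_consistent_def dfa_consistent_def acc
      nfa_wf_def dfa_wf_def by (auto split: option.splits)
qed

theorem mainTheorem7:
  fixes V :: "'a set" and E :: "'a \<Rightarrow> 'a \<Rightarrow> bool" and enc :: "'a \<Rightarrow> bool list" and k :: nat
    and Q :: "'s set" and I :: "'s set" and \<delta> :: "'s \<Rightarrow> bool \<Rightarrow> 's set" and F :: "'s set"
  assumes "simple_graph V E"
    and "card V = 2 ^ k"
    and "bij_betw enc V {w. length w = k}"
  shows "(nfa_consistent Q I \<delta> F (red_P V enc) (red_N V E enc)
            \<longrightarrow> chromatic_number V E \<le> card Q)
         \<and> opt_DFA (red_P V enc) (red_N V E enc) \<ge> opt_NFA (red_P V enc) (red_N V E enc)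
         \<and> opt_NFA (red_P V enc) (red_N V E enc) \<ge> chromatic_number V E"
proof -
  let ?P = "red_P V enc" and ?N = "red_N V E enc"
  have len: "length (enc u) = k" if "u \<in> V" for u using assms(3) that bij_betwE by fastforce
  have inj: "inj_on enc V" using assms(3) bij_betw_imp_inj_on by blast
  have irr: "\<not> E u u" for u using assms(1) unfolding simple_graph_def by blast
  have disj: "?P \<inter> ?N = {}"
  proof (rule ccontr)
    assume "?P \<inter> ?N \<noteq> {}"
    then obtain u u' v where uv: "u \<in> V" "u' \<in> V" "v \<in> V" "E u' v"
      and eq: "enc u @ [True] @ rev (enc u) = enc u' @ [True] @ rev (enc v)"
      unfolding red_P_def red_N_def by blast
    have "enc u = enc u' \<and> [True] @ rev (enc u) = [True] @ rev (enc v)"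
      using eq len uv by auto
    then have "u = u'" "u = v" using inj uv by (auto dest: inj_onD)
    then show False using uv irr by blast
  qed
  have lens: "\<forall>w\<in>?P \<union> ?N. length w \<le> 2*k+1"
    unfolding red_P_def red_N_def using len by auto
  obtain Qd :: "nat set" and q0 \<delta>d Fd where d: "dfa_consistent Qd q0 \<delta>d Fd ?P ?N"
    using dfa_exists[OF disj lens] by blast
  have exD: "\<exists>n. \<exists>(Q::nat set) q0 \<delta> F. dfa_consistent Q q0 \<delta> F ?P ?N \<and> card Q = n"
    using d by blast
  have exN: "\<exists>n. \<exists>(Q::nat set) I \<delta> F. nfa_consistent Q I \<delta> F ?P ?N \<and> card Q = n"
    using dfa_to_nfa[OF d] by blast
  have A: "opt_DFA ?P ?N \<ge> opt_NFA ?P ?N"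
  proof -
    obtain Q1 :: "nat set" and q1 \<delta>1 F1 where d1: "dfa_consistent Q1 q1 \<delta>1 F1 ?P ?N"
      and c1: "card Q1 = opt_DFA ?P ?N"
      using LeastI_ex[OF exD] unfolding opt_DFA_def by blast
    have "opt_NFA ?P ?N \<le> card Q1" unfolding opt_NFA_def
      using dfa_to_nfa[OF d1] by (intro Least_le) blast
    then show ?thesis using c1 by simp
  qed
  have B: "opt_NFA ?P ?N \<ge> chromatic_number V E"
  proof -
    obtain Q1 :: "nat set" and I1 \<delta>1 F1 where n1: "nfa_consistent Q1 I1 \<delta>1 F1 ?P ?N"
      and c1: "card Q1 = opt_NFA ?P ?N"
      using LeastI_ex[OF exN] unfolding opt_NFA_def by blast
    show ?thesis using part1[OF n1] c1 by simp
  qed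
  show ?thesis using part1 A B by blast
qed

end
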